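(* Let $\mu$ be a probability Borel measure on the unit circle $\mathbb T$ (with infinite support) that is symmetric with respect to complex conjugation, and let $\{\varphi_i\}_{i\ge0}$ be its orthonormal polynomials, $\int_{\mathbb T}\varphi_i\overline{\varphi_j}\,d\mu=\delta_{ij}$, $\deg\varphi_i=i$ with positive leading coefficient (these have real coefficients). Put $\varphi_n^*(z):=z^n\varphi_n(1/z)$, $b_n(z):=\varphi_n(z)/\varphi_n^*(z)$, and $$K_n(z,w)=\sum_{i=0}^{n-1}\varphi_i(z)\overline{\varphi_i(w)},\quad K_n^{(1,0)}(z,w)=\sum_{i=0}^{n-1}\varphi_i'(z)\overline{\varphi_i(w)},\quad K_n^{(1,1)}(z,w)=\sum_{i=0}^{n-1}\varphi_i'(z)\overline{\varphi_i'(w)}.$$ Let $P_n(z)=\sum_{i=0}^{n-1}\eta_i\varphi_i(z)$ with $\eta_0,\dots,\eta_{n-1}$ i.i.d. standard real Gaussian variables, and let $$\rho_n^{(1,0)}(x)=\frac1\pi\frac{\sqrt{K_n(x,x)K_n^{(1,1)}(x,x)-K_n^{(1,0)}(x,x)^2}}{K_n(x,x)},\qquad x\in\mathbb R,$$ be the intensity function of the real zeros of $P_n$. Then for real $x\neq\pm1$, $$\rho_n^{(1,0)}(x)=\frac1\pi\frac{\sqrt{1-h_n^2(x)}}{|1-x^2|},\qquad h_n(x)=\frac{(1-x^2)b_n'(x)}{1-b_n^2(x)}.$$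
   Context: $\rho_n^{(1,0)}$ is the density such that the expected number of real zeros of $P_n$ in a measurable set $E\subset\mathbb R$ equals $\int_E\rho_n^{(1,0)}(x)\,dx$. *)

theory Defs
  imports "HOL-Probability.Probability" "HOL-Computational_Algebra.Polynomial"
begin

definition msupport :: "complex measure \<Rightarrow> complex set" where
  "msupport M = {z. \<forall>e>0. emeasure M (ball z e) > 0}"

text \<open>Reversed polynomial: poly (phistar p) z = z^(degree p) * poly p (1/z) for z nonzero.\<close>
definition phistar :: "complex poly \<Rightarrow> complex poly" where
  "phistar p = reflect_poly p"

definition Kn :: "(nat \<Rightarrow> complex poly) \<Rightarrow> nat \<Rightarrow> complex \<Rightarrow> complex \<Rightarrow> complex" where
  "Kn \<phi> n z w = (\<Sum>i<n. poly (\<phi> i) z * cnj (poly (\<phi> i) w))"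

definition Kn10 :: "(nat \<Rightarrow> complex poly) \<Rightarrow> nat \<Rightarrow> complex \<Rightarrow> complex \<Rightarrow> complex" where
  "Kn10 \<phi> n z w = (\<Sum>i<n. poly (pderiv (\<phi> i)) z * cnj (poly (\<phi> i) w))"

definition Kn11 :: "(nat \<Rightarrow> complex poly) \<Rightarrow> nat \<Rightarrow> complex \<Rightarrow> complex \<Rightarrow> complex" where
  "Kn11 \<phi> n z w = (\<Sum>i<n. poly (pderiv (\<phi> i)) z * cnj (poly (pderiv (\<phi> i)) w))"

text \<open>Kac--Rice intensity of real zeros (values are real since the coefficients are real).\<close>
definition rho10 :: "(nat \<Rightarrow> complex poly) \<Rightarrow> nat \<Rightarrow> real \<Rightarrow> real" where
  "rho10 \<phi> n x =
     (let z = complex_of_real x in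
      1 / pi * sqrt (Re (Kn \<phi> n z z * Kn11 \<phi> n z z - (Kn10 \<phi> n z z)\<^sup>2)) / Re (Kn \<phi> n z z))"

definition bn :: "(nat \<Rightarrow> complex poly) \<Rightarrow> nat \<Rightarrow> complex \<Rightarrow> complex" where
  "bn \<phi> n z = poly (\<phi> n) z / poly (phistar (\<phi> n)) z"

definition hn :: "(nat \<Rightarrow> complex poly) \<Rightarrow> nat \<Rightarrow> real \<Rightarrow> real" where
  "hn \<phi> n x =
     (let z = complex_of_real x in
      Re ((1 - z\<^sup>2) * deriv (bn \<phi> n) z / (1 - (bn \<phi> n z)\<^sup>2)))"

end

theory Submission imports Defs "HOL-Computational_Algebra.Fundamental_Theorem_Algebra" begin

lemma poly_eq_nonzero:
  fixes p q :: "complex poly"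
  assumes "\<And>z. z \<noteq> 0 \<Longrightarrow> poly p z = poly q z"
  shows "p = q"
proof (rule ccontr)
  assume "p \<noteq> q"
  then have "p - q \<noteq> 0" by simp
  then have "finite {z. poly (p - q) z = 0}" by (rule poly_roots_finite)
  moreover have "UNIV - {0} \<subseteq> {z. poly (p - q) z = 0}" using assms by auto
  ultimately have "finite (UNIV - {0::complex})" by (rule finite_subset[rotated])
  then show False by (simp add: infinite_UNIV_char_0)
qed

locale opuc =
  fixes M :: "complex measure" and \<phi> :: "nat \<Rightarrow> complex poly"
  assumes prob: "prob_space M"
    and borel: "sets M = sets borel"
    and circle: "emeasure M (sphere 0 1) = 1"
    and symm: "\<And>A. A \<in> sets borel \<Longrightarrow> emeasure M (cnj ` A) = emeasure M A"
    and deg: "\<And>i. degree (\<phi> i) = i"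
    and lead: "\<And>i. Im (lead_coeff (\<phi> i)) = 0 \<and> Re (lead_coeff (\<phi> i)) > 0"
    and orth: "\<And>i j. integral\<^sup>L M (\<lambda>z. poly (\<phi> i) z * cnj (poly (\<phi> j) z))
                       = (if i = j then 1 else 0)"
begin

definition ip :: "complex poly \<Rightarrow> complex poly \<Rightarrow> complex" where
  "ip p q = integral\<^sup>L M (\<lambda>z. poly p z * cnj (poly q z))"

lemma space_M: "space M = UNIV"
  using sets_eq_imp_space_eq[OF borel] by simp

lemma meas_M: "measurable M N = measurable borel N"
  by (rule measurable_cong_sets[OF borel refl])

lemma AE_sphere: "AE z in M. z \<in> sphere 0 1"
proof -
  interpret prob_space M by (rule prob)
  have "prob (sphere 0 1) = 1" using circle by (simp add: emeasure_eq_measure)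
  then show ?thesis by (rule AE_prob_1)
qed

lemma AE_norm1: "AE z in M. norm z = 1"
  using AE_sphere by (auto)

lemma integrable_poly2: "integrable M (\<lambda>z. poly p z * cnj (poly q z))"
proof -
  obtain m1 where m1: "\<forall>z. norm z \<le> 1 \<longrightarrow> norm (poly p z) \<le> m1"
    and "m1 > 0" using poly_bound_exists[of 1 p] by blast
  obtain m2 where m2: "\<forall>z. norm z \<le> 1 \<longrightarrow> norm (poly q z) \<le> m2"
    and "m2 > 0" using poly_bound_exists[of 1 q] by blast
  have meas: "(\<lambda>z. poly p z * cnj (poly q z)) \<in> borel_measurable M"
    unfolding meas_M by (intro borel_measurable_continuous_onI continuous_intros)
  show ?thesis
  proof (rule integrableI_bounded_set[where A="sphere 0 1" and B="m1*m2"])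
    show "sphere 0 1 \<in> sets M" using borel by simp
    show "emeasure M (sphere 0 1) < \<infinity>" using circle by simp
    show "AE x in M. x \<in> sphere 0 1 \<longrightarrow> norm (poly p x * cnj (poly q x)) \<le> m1 * m2"
      using AE_sphere by eventually_elim (use m1 m2 \<open>m1 > 0\<close> in \<open>auto simp: norm_mult intro!: mult_mono\<close>)
    show "AE x in M. x \<notin> sphere 0 1 \<longrightarrow> poly p x * cnj (poly q x) = 0"
      using AE_sphere by auto
  qed (fact meas)
qed

lemma ip_add1: "ip (p + q) r = ip p r + ip q r"
  unfolding ip_def using integrable_poly2[of p r] integrable_poly2[of q r]
  by (simp add: distrib_right)

lemma ip_smult1: "ip (smult c p) r = c * ip p r"
  unfolding ip_def by (simp add: mult.assoc)

lemma ip_diff1: "ip (p - q) r = ip p r - ip q r"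
  unfolding ip_def using integrable_poly2[of p r] integrable_poly2[of q r]
  by (simp add: left_diff_distrib)

lemma ip_cnj: "ip q p = cnj (ip p q)"
proof -
  have "ip q p = integral\<^sup>L M (\<lambda>z. cnj (poly p z * cnj (poly q z)))"
    unfolding ip_def by (rule Bochner_Integration.integral_cong) (auto simp: mult.commute)
  also have "\<dots> = cnj (ip p q)" unfolding ip_def by (rule Bochner_Integration.integral_cnj)
  finally show ?thesis .
qed

lemma ip_0: "ip 0 r = 0" by (simp add: ip_def)

lemma ip_sum1: "ip (\<Sum>j\<in>A. f j) r = (\<Sum>j\<in>A. ip (f j) r)"
  by (induction A rule: infinite_finite_induct) (auto simp: ip_add1 ip_0)

lemma ip_add2: "ip r (p + q) = ip r p + ip r q"
  using ip_cnj[of r "p+q"] ip_cnj[of r p] ip_cnj[of r q] by (simp add: ip_add1)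
lemma ip_smult2: "ip r (smult c p) = cnj c * ip r p"
  using ip_cnj[of r "smult c p"] ip_cnj[of r p] by (simp add: ip_smult1)
lemma ip_sum2: "ip r (\<Sum>j\<in>A. f j) = (\<Sum>j\<in>A. ip r (f j))"
  using ip_cnj[of r "sum f A"] ip_cnj[of r] by (simp add: ip_sum1)

lemma ip_orth: "ip (\<phi> i) (\<phi> j) = (if i = j then 1 else 0)"
  unfolding ip_def by (rule orth)

lemma ip_shift: "ip ([:0,1:] * p) ([:0,1:] * q) = ip p q"
  unfolding ip_def
proof (rule integral_cong_AE)
  show "AE z in M. poly ([:0,1:] * p) z * cnj (poly ([:0,1:] * q) z) = poly p z * cnj (poly q z)"
    using AE_norm1
  proof eventually_elim
    case (elim z)
    have "z * cnj z = 1" using elim by (simp add: complex_norm_square[symmetric])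
    then show ?case by (simp add: algebra_simps)
  qed
qed (auto simp: meas_M intro!: borel_measurable_continuous_onI continuous_intros)


lemma lead_nz: "lead_coeff (\<phi> i) \<noteq> 0"
  using lead[of i] by auto

lemma lead_real: "cnj (lead_coeff (\<phi> i)) = lead_coeff (\<phi> i)"
  using lead[of i] by (simp add: complex_eq_iff)

lemma expand_ex: "degree p \<le> m \<Longrightarrow> \<exists>c. p = (\<Sum>j\<le>m. smult (c j) (\<phi> j))"
proof (induction m arbitrary: p)
  case 0
  then obtain a where p: "p = [:a:]" by (metis degree0_coeffs le_zero_eq)
  obtain k where k: "\<phi> 0 = [:k:]" using deg[of 0] by (metis degree0_coeffs)
  have "k \<noteq> 0" using lead_nz[of 0] k by simp
  then have "p = smult (a / k) (\<phi> 0)" using p k by simp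
  then show ?case by (intro exI[of _ "\<lambda>_. a / k"]) simp
next
  case (Suc m)
  define d where "d = coeff p (Suc m) / lead_coeff (\<phi> (Suc m))"
  define q where "q = p - smult d (\<phi> (Suc m))"
  have "degree q \<le> m"
  proof (rule degree_le, intro allI impI)
    fix i assume "m < i"
    show "coeff q i = 0"
    proof (cases "i = Suc m")
      case True
      then show ?thesis using lead_nz[of "Suc m"] deg[of "Suc m"]
        by (simp add: q_def d_def)
    next
      case False
      then have "i > Suc m" using \<open>m < i\<close> by simp
      then show ?thesis using Suc.prems deg[of "Suc m"]
        by (simp add: q_def coeff_eq_0)
    qed
  qed
  then obtain c where c: "q = (\<Sum>j\<le>m. smult (c j) (\<phi> j))" using Suc.IH by blast
  have "p = q + smult d (\<phi> (Suc m))" by (simp add: q_def)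
  also have "\<dots> = (\<Sum>j\<le>Suc m. smult ((c(Suc m := d)) j) (\<phi> j))"
    by (simp add: c)
  finally show ?case by blast
qed

lemma expand: "degree p \<le> m \<Longrightarrow> p = (\<Sum>j\<le>m. smult (ip p (\<phi> j)) (\<phi> j))"
proof -
  assume "degree p \<le> m"
  then obtain c where c: "p = (\<Sum>j\<le>m. smult (c j) (\<phi> j))" using expand_ex by blast
  have "ip p (\<phi> k) = c k" if "k \<le> m" for k
  proof -
    have "ip p (\<phi> k) = (\<Sum>j\<le>m. c j * (if j = k then 1 else 0))"
      by (subst c) (simp add: ip_sum1 ip_smult1 ip_orth)
    also have "\<dots> = c k" using that by (simp add: if_distrib sum.delta cong: if_cong)
    finally show ?thesis .
  qed
  then show ?thesis by (subst c) (intro sum.cong refl, simp)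
qed

lemma orth_low: "degree p < n \<Longrightarrow> ip (\<phi> n) p = 0"
proof -
  assume a: "degree p < n"
  then have "p = (\<Sum>j\<le>n-1. smult (ip p (\<phi> j)) (\<phi> j))" by (intro expand) simp
  then have "ip (\<phi> n) p = (\<Sum>j\<le>n-1. cnj (ip p (\<phi> j)) * ip (\<phi> n) (\<phi> j))"
    by (metis (no_types, lifting) ip_smult2 ip_sum2 sum.cong)
  also have "\<dots> = 0" using a by (intro sum.neutral) (auto simp: ip_orth)
  finally show ?thesis .
qed

lemma vimage_cnj: "cnj -` A = cnj ` A"
  by (auto simp: image_iff) (metis complex_cnj_cnj)

lemma mcnj: "cnj \<in> measurable M M"
proof -
  have "cnj \<in> borel_measurable borel" by (intro borel_measurable_continuous_onI continuous_intros)
  then show ?thesis by (simp add: measurable_cong_sets[OF borel borel])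
qed

lemma distr_cnj: "distr M M cnj = M"
proof (rule measure_eqI)
  have mc: "cnj \<in> measurable M M" by (rule mcnj)
  show "sets (distr M M cnj) = sets M" by simp
  fix A assume "A \<in> sets (distr M M cnj)"
  then have A: "A \<in> sets M" by simp
  show "emeasure (distr M M cnj) A = emeasure M A"
    using A mc borel symm[of A] by (simp add: emeasure_distr space_M vimage_cnj)
qed

lemma ip_conj_polys: "ip (map_poly cnj p) (map_poly cnj q) = ip q p"
proof -
  let ?g = "\<lambda>y. poly q y * cnj (poly p y)"
  have mc: "cnj \<in> measurable M M" by (rule mcnj)
  have mg: "?g \<in> borel_measurable M" unfolding meas_M
    by (intro borel_measurable_continuous_onI continuous_intros)
  have "ip (map_poly cnj p) (map_poly cnj q) = integral\<^sup>L M (\<lambda>z. ?g (cnj z))"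
    unfolding ip_def by (rule Bochner_Integration.integral_cong) (auto simp: mult.commute)
  also have "\<dots> = integral\<^sup>L (distr M M cnj) ?g"
    by (rule integral_distr[symmetric, OF mc mg])
  also have "\<dots> = ip q p" by (simp add: distr_cnj ip_def)
  finally show ?thesis .
qed

lemma real_coeffs: "map_poly cnj (\<phi> n) = \<phi> n"
proof (induction n rule: less_induct)
  case (less n)
  define \<psi> where "\<psi> = map_poly cnj (\<phi> n)"
  have dpsi: "degree \<psi> = n" unfolding \<psi>_def by (simp add: degree_map_poly deg)
  have e: "\<psi> = (\<Sum>j\<le>n. smult (ip \<psi> (\<phi> j)) (\<phi> j))" using dpsi by (intro expand) simp
  have z: "ip \<psi> (\<phi> j) = 0" if "j < n" for j
  proof -
    have "ip \<psi> (\<phi> j) = ip \<psi> (map_poly cnj (\<phi> j))" using less.IH[OF that] by simp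
    also have "\<dots> = ip (\<phi> j) (\<phi> n)" unfolding \<psi>_def by (rule ip_conj_polys)
    also have "\<dots> = 0" using that by (simp add: ip_orth)
    finally show ?thesis .
  qed
  have "{..n} = insert n {..<n}" by auto
  then have "\<psi> = smult (ip \<psi> (\<phi> n)) (\<phi> n) + (\<Sum>j<n. smult (ip \<psi> (\<phi> j)) (\<phi> j))"
    using e by simp
  also have "(\<Sum>j<n. smult (ip \<psi> (\<phi> j)) (\<phi> j)) = 0" by (intro sum.neutral) (simp add: z)
  finally have psi: "\<psi> = smult (ip \<psi> (\<phi> n)) (\<phi> n)" by simp
  have "lead_coeff \<psi> = cnj (lead_coeff (\<phi> n))" unfolding \<psi>_def
    by (simp add: coeff_map_poly dpsi[unfolded \<psi>_def] deg)
  also have "\<dots> = lead_coeff (\<phi> n)" by (rule lead_real)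
  finally have "ip \<psi> (\<phi> n) * lead_coeff (\<phi> n) = lead_coeff (\<phi> n)"
    using psi by (metis coeff_smult dpsi deg)
  then have "ip \<psi> (\<phi> n) = 1" using lead_nz[of n] by simp
  then show ?case using psi \<psi>_def by simp
qed

lemma poly_cnj_phi: "poly (\<phi> n) (cnj z) = cnj (poly (\<phi> n) z)"
  by (metis poly_cnj real_coeffs complex_cnj_cnj)

lemma poly_real_phi: "poly (\<phi> n) (complex_of_real x) = complex_of_real (Re (poly (\<phi> n) (complex_of_real x)))"
proof -
  have "cnj (poly (\<phi> n) (complex_of_real x)) = poly (\<phi> n) (complex_of_real x)"
    using poly_cnj_phi[of n "complex_of_real x"] by simp
  then show ?thesis by (metis Reals_cnj_iff of_real_Re)
qed


lemma orth_from_monoms: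
  assumes "\<And>k. k < n \<Longrightarrow> ip s (monom 1 k) = 0" and "degree p < n"
  shows "ip s p = 0"
proof -
  have "p = (\<Sum>i\<le>n-1. monom (coeff p i) i)"
    using assms(2) by (intro poly_as_sum_of_monoms'[symmetric]) simp
  also have "\<dots> = (\<Sum>i\<le>n-1. smult (coeff p i) (monom 1 i))"
    by (simp add: smult_monom)
  finally have "ip s p = (\<Sum>i\<le>n-1. cnj (coeff p i) * ip s (monom 1 i))"
    by (metis (no_types, lifting) ip_smult2 ip_sum2 sum.cong)
  also have "\<dots> = 0"
  proof (intro sum.neutral ballI)
    fix i assume "i \<in> {..n-1}"
    show "cnj (coeff p i) * ip s (monom 1 i) = 0"
    proof (cases "i < n")
      case True then show ?thesis by (simp add: assms(1))
    next
      case False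
      then have "i > degree p" using assms(2) by simp
      then show ?thesis by (simp add: coeff_eq_0)
    qed
  qed
  finally show ?thesis .
qed

lemma inv_circle: "norm z = 1 \<Longrightarrow> inverse z = cnj z"
proof -
  assume "norm z = 1"
  then have "z * cnj z = 1" by (simp add: complex_norm_square[symmetric])
  then show ?thesis by (metis inverse_unique)
qed

lemma zcnj_circle: "norm z = 1 \<Longrightarrow> z * cnj z = 1"
  by (simp add: complex_norm_square[symmetric])

lemma phis_circle:
  "norm z = 1 \<Longrightarrow> poly (reflect_poly (\<phi> n)) z = z ^ n * cnj (poly (\<phi> n) z)"
proof -
  assume z: "norm z = 1"
  then have "z \<noteq> 0" by auto
  then have "poly (reflect_poly (\<phi> n)) z = z ^ n * poly (\<phi> n) (cnj z)"
    using poly_reflect_poly_nz[of z "\<phi> n"] inv_circle[OF z] deg by simp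
  then show ?thesis by (simp add: poly_cnj_phi)
qed

lemma deg_phis: "degree (reflect_poly (\<phi> n)) \<le> n"
  using degree_reflect_poly_le deg by metis

lemma phis_monom:
  assumes "k < n"
  shows "ip (reflect_poly (\<phi> n)) (monom 1 (Suc k)) = 0"
proof -
  have "ip (reflect_poly (\<phi> n)) (monom 1 (Suc k)) =
        integral\<^sup>L M (\<lambda>z. cnj (poly (\<phi> n) z * cnj (poly (monom 1 (n - Suc k)) z)))"
    unfolding ip_def
  proof (rule integral_cong_AE)
    show "AE z in M. poly (reflect_poly (\<phi> n)) z * cnj (poly (monom 1 (Suc k)) z) =
                     cnj (poly (\<phi> n) z * cnj (poly (monom 1 (n - Suc k)) z))"
      using AE_norm1
    proof eventually_elim
      case (elim z)
      have e: "z ^ n = z ^ (n - Suc k) * z ^ (Suc k)" using assms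
        by (metis Suc_leI le_add_diff_inverse2 power_add)
      have "(z * cnj z) ^ Suc k = 1" using zcnj_circle[OF elim] by simp
      then have h: "z ^ Suc k * cnj z ^ Suc k = 1" by (metis power_mult_distrib)
      have "poly (reflect_poly (\<phi> n)) z * cnj (poly (monom 1 (Suc k)) z)
            = cnj (poly (\<phi> n) z) * z ^ (n - Suc k) * (z ^ Suc k * cnj z ^ Suc k)"
        unfolding phis_circle[OF elim] poly_monom e by (simp add: complex_cnj_power)
      also have "\<dots> = cnj (poly (\<phi> n) z * cnj (poly (monom 1 (n - Suc k)) z))"
        using h by (simp add: poly_monom complex_cnj_power)
      finally show ?case .
    qed
  qed (auto simp: meas_M intro!: borel_measurable_continuous_onI continuous_intros)
  also have "\<dots> = cnj (ip (\<phi> n) (monom 1 (n - Suc k)))"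
    unfolding ip_def by (rule Bochner_Integration.integral_cnj)
  also have "\<dots> = 0" using assms by (simp add: orth_low degree_monom_eq)
  finally show ?thesis .
qed

lemma phis_norm: "ip (reflect_poly (\<phi> n)) (reflect_poly (\<phi> n)) = 1"
proof -
  have "ip (reflect_poly (\<phi> n)) (reflect_poly (\<phi> n)) = ip (\<phi> n) (\<phi> n)"
    unfolding ip_def
  proof (rule integral_cong_AE)
    show "AE z in M. poly (reflect_poly (\<phi> n)) z * cnj (poly (reflect_poly (\<phi> n)) z) =
                     poly (\<phi> n) z * cnj (poly (\<phi> n) z)"
      using AE_norm1
    proof eventually_elim
      case (elim z)
      have "(z * cnj z) ^ n = 1" using zcnj_circle[OF elim] by simp
      then have "z ^ n * cnj z ^ n = 1" by (simp add: power_mult_distrib)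
      then show ?case by (simp add: phis_circle[OF elim] algebra_simps)
    qed
  qed (auto simp: meas_M intro!: borel_measurable_continuous_onI continuous_intros)
  then show ?thesis by (simp add: ip_orth)
qed


lemma X_mult: "[:0,1:] * (p::complex poly) = pCons 0 p" by simp

lemma phi_nz: "\<phi> n \<noteq> 0" using lead_nz[of n] by auto

lemma szego:
  "\<exists>a c. \<phi> (Suc n) = smult a ([:0,1:] * \<phi> n) + smult c (reflect_poly (\<phi> n)) \<and> a * a - c * c = 1"
proof -
  define \<kappa> where "\<kappa> j = lead_coeff (\<phi> j)" for j
  have knz: "\<kappa> j \<noteq> 0" for j using lead_nz by (simp add: \<kappa>_def)
  define a where "a = \<kappa> (Suc n) / \<kappa> n"
  define X where "X = [:0,1:] * \<phi> n"
  define q where "q = \<phi> (Suc n) - smult a X"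
  have degX: "degree X = Suc n" using deg[of n] phi_nz[of n] by (simp add: X_def X_mult)
  have "degree q \<le> n"
  proof (rule degree_le, intro allI impI)
    fix i assume "n < i"
    show "coeff q i = 0"
    proof (cases "i = Suc n")
      case True
      then show ?thesis using knz[of n] deg[of n] deg[of "Suc n"]
        by (simp add: q_def a_def X_def X_mult \<kappa>_def)
    next
      case False
      then have "i > Suc n" using \<open>n < i\<close> by simp
      then show ?thesis using deg[of "Suc n"] degX by (simp add: q_def coeff_eq_0)
    qed
  qed
  have qm: "ip q (monom 1 (Suc k)) = 0" if "k < n" for k
  proof -
    have "ip (\<phi> (Suc n)) (monom 1 (Suc k)) = 0"
      using that by (intro orth_low) (simp add: degree_monom_eq)
    moreover have "ip X (monom 1 (Suc k)) = 0"
    proof -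
      have "ip X (monom 1 (Suc k)) = ip ([:0,1:] * \<phi> n) ([:0,1:] * monom 1 k)"
        by (simp add: X_def monom_Suc X_mult)
      also have "\<dots> = ip (\<phi> n) (monom 1 k)" by (rule ip_shift)
      also have "\<dots> = 0" using that by (intro orth_low) (simp add: degree_monom_eq)
      finally show ?thesis .
    qed
    ultimately show ?thesis by (simp add: q_def ip_diff1 ip_smult1)
  qed
  define c where "c = coeff q 0 / \<kappa> n"
  define r where "r = q - smult c (reflect_poly (\<phi> n))"
  have r0: "coeff r 0 = 0" using knz[of n] by (simp add: r_def c_def \<kappa>_def)
  have degr: "degree r \<le> n" using \<open>degree q \<le> n\<close> deg_phis[of n]
    unfolding r_def by (meson degree_diff_le degree_smult_le order_trans)
  have rm: "ip r (monom 1 (Suc k)) = 0" if "k < n" for k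
    using qm[OF that] phis_monom[OF that] by (simp add: r_def ip_diff1 ip_smult1)
  obtain b s where rs: "r = pCons b s" by (cases r)
  with r0 have rs: "r = pCons 0 s" by simp
  have "s = 0"
  proof (rule ccontr)
    assume "s \<noteq> 0"
    then have ds: "degree s < n" using degr rs by simp
    have sm: "ip s (monom 1 k) = 0" if "k < n" for k
    proof -
      have "ip s (monom 1 k) = ip ([:0,1:] * s) ([:0,1:] * monom 1 k)" by (rule ip_shift[symmetric])
      also have "\<dots> = ip r (monom 1 (Suc k))" by (simp add: rs monom_Suc X_mult)
      also have "\<dots> = 0" using rm[OF that] .
      finally show ?thesis .
    qed
    have "s = (\<Sum>j\<le>n-1. smult (ip s (\<phi> j)) (\<phi> j))" using ds by (intro expand) simp
    also have "\<dots> = 0"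
    proof (intro sum.neutral ballI)
      fix j assume "j \<in> {..n-1}"
      then have "degree (\<phi> j) < n" using ds by (auto simp: deg)
      then show "smult (ip s (\<phi> j)) (\<phi> j) = 0" using orth_from_monoms[OF sm] by simp
    qed
    finally show False using \<open>s \<noteq> 0\<close> by simp
  qed
  then have r00: "r = 0" using rs by simp
  have eq: "\<phi> (Suc n) = smult a X + smult c (reflect_poly (\<phi> n))"
    using r00 unfolding r_def q_def by (simp add: algebra_simps)
  have areal: "cnj a = a" using lead_real by (simp add: a_def \<kappa>_def)
  have "coeff q 0 = coeff (\<phi> (Suc n)) 0" by (simp add: q_def X_def X_mult)
  moreover have "cnj (coeff (\<phi> (Suc n)) 0) = coeff (\<phi> (Suc n)) 0"
    by (metis coeff_map_poly complex_cnj_zero real_coeffs)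
  ultimately have creal: "cnj c = c" using lead_real by (simp add: c_def \<kappa>_def)
  have anz: "a \<noteq> 0" using knz by (simp add: a_def)
  define t where "t = ip X (reflect_poly (\<phi> n))"
  have "ip (\<phi> (Suc n)) (reflect_poly (\<phi> n)) = 0"
    using deg_phis[of n] by (intro orth_low) simp
  then have t1: "a * t + c = 0" by (simp add: eq ip_add1 ip_smult1 phis_norm t_def)
  have XX: "ip X X = 1" unfolding X_def ip_shift ip_orth by simp
  have "1 = ip (\<phi> (Suc n)) (\<phi> (Suc n))" by (simp add: ip_orth)
  also have "\<dots> = cnj a * ip (\<phi> (Suc n)) X + cnj c * ip (\<phi> (Suc n)) (reflect_poly (\<phi> n))"
    by (subst (2) eq) (simp add: ip_add2 ip_smult2)
  also have "ip (\<phi> (Suc n)) (reflect_poly (\<phi> n)) = 0"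
    using deg_phis[of n] by (intro orth_low) simp
  also have "ip (\<phi> (Suc n)) X = a + c * cnj t"
    by (subst eq) (simp add: ip_add1 ip_smult1 XX t_def ip_cnj[of "reflect_poly (\<phi> n)" X])
  finally have e1: "1 = a * (a + c * cnj t)" using areal by simp
  have "t = - c / a" using t1 anz by (simp add: field_simps add_eq_0_iff)
  then have "cnj t = - c / a" using areal creal by simp
  then have "a * cnj t = - c" using anz by simp
  moreover have "a * (c * cnj t) = c * (a * cnj t)" by (simp add: ac_simps)
  ultimately have "a * a - c * c = 1" using e1 by (simp add: algebra_simps)
  then show ?thesis using eq unfolding X_def by blast
qed


lemma reflect_step:
  assumes "\<phi> (Suc n) = smult a ([:0,1:] * \<phi> n) + smult c (reflect_poly (\<phi> n))"
  shows "reflect_poly (\<phi> (Suc n)) = smult a (reflect_poly (\<phi> n)) + smult c ([:0,1:] * \<phi> n)"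
proof (rule poly_eq_nonzero)
  fix z :: complex assume z: "z \<noteq> 0"
  have r1: "poly (reflect_poly (\<phi> n)) (inverse z) = (inverse z) ^ n * poly (\<phi> n) z"
    using poly_reflect_poly_nz[of "inverse z" "\<phi> n"] z deg by simp
  have r2: "poly (reflect_poly (\<phi> n)) z = z ^ n * poly (\<phi> n) (inverse z)"
    using poly_reflect_poly_nz[of z "\<phi> n"] z deg by simp
  have "poly (reflect_poly (\<phi> (Suc n))) z = z ^ Suc n * poly (\<phi> (Suc n)) (inverse z)"
    using poly_reflect_poly_nz[of z "\<phi> (Suc n)"] z deg by simp
  also have "\<dots> = z ^ Suc n * (a * inverse z * poly (\<phi> n) (inverse z) + c * ((inverse z) ^ n * poly (\<phi> n) z))"
    by (subst assms) (simp add: r1)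
  also have "\<dots> = a * (z ^ n * poly (\<phi> n) (inverse z)) + c * z * poly (\<phi> n) z"
    using z by (simp add: field_simps)
  also have "\<dots> = poly (smult a (reflect_poly (\<phi> n)) + smult c ([:0,1:] * \<phi> n)) z"
    by (simp add: r2)
  finally show "poly (reflect_poly (\<phi> (Suc n))) z = poly (smult a (reflect_poly (\<phi> n)) + smult c ([:0,1:] * \<phi> n)) z" .
qed

definition G :: "nat \<Rightarrow> complex \<Rightarrow> complex \<Rightarrow> complex" where
  "G n z u = (\<Sum>i<n. poly (\<phi> i) z * poly (\<phi> i) u)"

lemma CD: "(1 - z * u) * G n z u =
   poly (reflect_poly (\<phi> n)) z * poly (reflect_poly (\<phi> n)) u - poly (\<phi> n) z * poly (\<phi> n) u"
proof (induction n)
  case 0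
  obtain k where k: "\<phi> 0 = [:k:]" using deg[of 0] by (metis degree0_coeffs)
  show ?case by (simp add: G_def k)
next
  case (Suc n)
  obtain a c where e: "\<phi> (Suc n) = smult a ([:0,1:] * \<phi> n) + smult c (reflect_poly (\<phi> n))"
    and ac: "a * a - c * c = 1" using szego[of n] by blast
  note r = reflect_step[OF e]
  define A where "A = poly (reflect_poly (\<phi> n)) z"
  define A' where "A' = poly (reflect_poly (\<phi> n)) u"
  define B where "B = poly (\<phi> n) z"
  define B' where "B' = poly (\<phi> n) u"
  have "(1 - z * u) * G (Suc n) z u = (1 - z * u) * G n z u + (1 - z * u) * B * B'"
    by (simp add: G_def B_def B'_def algebra_simps)
  also have "\<dots> = A * A' - z * u * B * B'"
    using Suc.IH by (simp add: A_def A'_def B_def B'_def algebra_simps)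
  also have "\<dots> = (a * a - c * c) * (A * A' - z * u * B * B')" using ac by simp
  also have "\<dots> = (a * A + c * z * B) * (a * A' + c * u * B') - (a * z * B + c * A) * (a * u * B' + c * A')"
    by (simp add: algebra_simps)
  also have "\<dots> = poly (reflect_poly (\<phi> (Suc n))) z * poly (reflect_poly (\<phi> (Suc n))) u
       - poly (\<phi> (Suc n)) z * poly (\<phi> (Suc n)) u"
  proof -
    have pz: "poly (\<phi> (Suc n)) w = a * w * poly (\<phi> n) w + c * poly (reflect_poly (\<phi> n)) w" for w
      by (subst e) simp
    have pr: "poly (reflect_poly (\<phi> (Suc n))) w = a * poly (reflect_poly (\<phi> n)) w + c * w * poly (\<phi> n) w" for w
      by (subst r) simp
    show ?thesis unfolding pz pr A_def A'_def B_def B'_def by (simp add: algebra_simps)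
  qed
  finally show ?case .
qed


definition G10 :: "nat \<Rightarrow> complex \<Rightarrow> complex \<Rightarrow> complex" where
  "G10 n z u = (\<Sum>i<n. poly (pderiv (\<phi> i)) z * poly (\<phi> i) u)"
definition G11 :: "nat \<Rightarrow> complex \<Rightarrow> complex \<Rightarrow> complex" where
  "G11 n z u = (\<Sum>i<n. poly (pderiv (\<phi> i)) z * poly (pderiv (\<phi> i)) u)"

lemma dGz: "((\<lambda>z. G n z u) has_field_derivative G10 n z u) (at z)"
  unfolding G_def G10_def by (auto intro!: derivative_eq_intros)
lemma dGu: "((\<lambda>u. G n z u) has_field_derivative G10 n u z) (at u)"
  unfolding G_def G10_def by (auto intro!: derivative_eq_intros simp: mult.commute)
lemma dG10u: "((\<lambda>u. G10 n z u) has_field_derivative G11 n z u) (at u)"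
  unfolding G11_def G10_def by (auto intro!: derivative_eq_intros simp: mult.commute)

lemma D1: "- u * G n z u + (1 - z * u) * G10 n z u =
   poly (pderiv (reflect_poly (\<phi> n))) z * poly (reflect_poly (\<phi> n)) u
   - poly (pderiv (\<phi> n)) z * poly (\<phi> n) u"
proof -
  have d1: "((\<lambda>z. (1 - z * u) * G n z u) has_field_derivative (- u * G n z u + (1 - z * u) * G10 n z u)) (at z)"
  proof -
    have a2: "((\<lambda>z. (1 - z * u) * G n z u) has_field_derivative ((1 - z * u) * G10 n z u + (- u) * G n z u)) (at z)"
      by (intro DERIV_mult' dGz) (auto intro!: derivative_eq_intros)
    show ?thesis by (rule DERIV_cong[OF a2]) (simp add: algebra_simps)
  qed
  have d2: "((\<lambda>z. poly (reflect_poly (\<phi> n)) z * poly (reflect_poly (\<phi> n)) u - poly (\<phi> n) z * poly (\<phi> n) u)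
     has_field_derivative (poly (pderiv (reflect_poly (\<phi> n))) z * poly (reflect_poly (\<phi> n)) u
   - poly (pderiv (\<phi> n)) z * poly (\<phi> n) u)) (at z)"
    by (auto intro!: derivative_eq_intros)
  have "(\<lambda>z. (1 - z * u) * G n z u) = (\<lambda>z. poly (reflect_poly (\<phi> n)) z * poly (reflect_poly (\<phi> n)) u - poly (\<phi> n) z * poly (\<phi> n) u)"
    using CD by auto
  with d1 have d1': "((\<lambda>z. poly (reflect_poly (\<phi> n)) z * poly (reflect_poly (\<phi> n)) u - poly (\<phi> n) z * poly (\<phi> n) u)
     has_field_derivative (- u * G n z u + (1 - z * u) * G10 n z u)) (at z)" by simp
  show ?thesis by (rule DERIV_unique[OF d1' d2])
qed

lemma D2: "- G n z u - u * G10 n u z - z * G10 n z u + (1 - z * u) * G11 n z u =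
   poly (pderiv (reflect_poly (\<phi> n))) z * poly (pderiv (reflect_poly (\<phi> n))) u
   - poly (pderiv (\<phi> n)) z * poly (pderiv (\<phi> n)) u"
proof -
  have d1: "((\<lambda>u. - u * G n z u + (1 - z * u) * G10 n z u) has_field_derivative
       (- G n z u - u * G10 n u z - z * G10 n z u + (1 - z * u) * G11 n z u)) (at u)"
  proof -
    have a1: "((\<lambda>u. - u * G n z u) has_field_derivative (- u * G10 n u z + (-1) * G n z u)) (at u)"
      by (intro DERIV_mult' dGu) (auto intro!: derivative_eq_intros)
    have a2: "((\<lambda>u. (1 - z * u) * G10 n z u) has_field_derivative ((1 - z * u) * G11 n z u + (- z) * G10 n z u)) (at u)"
      by (intro DERIV_mult' dG10u) (auto intro!: derivative_eq_intros)
    show ?thesis by (rule DERIV_cong[OF DERIV_add[OF a1 a2]]) (simp add: algebra_simps)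
  qed
  have d2: "((\<lambda>u. poly (pderiv (reflect_poly (\<phi> n))) z * poly (reflect_poly (\<phi> n)) u
   - poly (pderiv (\<phi> n)) z * poly (\<phi> n) u)
     has_field_derivative (poly (pderiv (reflect_poly (\<phi> n))) z * poly (pderiv (reflect_poly (\<phi> n))) u
   - poly (pderiv (\<phi> n)) z * poly (pderiv (\<phi> n)) u)) (at u)"
    by (auto intro!: derivative_eq_intros)
  have "(\<lambda>u. - u * G n z u + (1 - z * u) * G10 n z u) = (\<lambda>u. poly (pderiv (reflect_poly (\<phi> n))) z * poly (reflect_poly (\<phi> n)) u
   - poly (pderiv (\<phi> n)) z * poly (\<phi> n) u)"
    using D1 by auto
  with d1 have d1': "((\<lambda>u. poly (pderiv (reflect_poly (\<phi> n))) z * poly (reflect_poly (\<phi> n)) u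
   - poly (pderiv (\<phi> n)) z * poly (\<phi> n) u) has_field_derivative
       (- G n z u - u * G10 n u z - z * G10 n z u + (1 - z * u) * G11 n z u)) (at u)" by simp
  show ?thesis by (rule DERIV_unique[OF d1' d2])
qed


end

definition rpoly :: "complex poly \<Rightarrow> bool" where "rpoly p \<longleftrightarrow> map_poly cnj p = p"

lemma rpoly_pderiv: "rpoly p \<Longrightarrow> rpoly (pderiv p)"
  unfolding rpoly_def
proof -
  assume a: "map_poly cnj p = p"
  show "map_poly cnj (pderiv p) = pderiv p"
  proof (rule poly_eqI)
    fix n
    have "coeff (map_poly cnj (pderiv p)) n = of_nat (Suc n) * cnj (coeff p (Suc n))"
      by (simp add: coeff_map_poly coeff_pderiv)
    also have "cnj (coeff p (Suc n)) = coeff p (Suc n)"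
      using arg_cong[OF a, of "\<lambda>q. coeff q (Suc n)"] by (simp add: coeff_map_poly)
    finally show "coeff (map_poly cnj (pderiv p)) n = coeff (pderiv p) n"
      by (simp add: coeff_pderiv)
  qed
qed

lemma rpoly_reflect: "rpoly p \<Longrightarrow> rpoly (reflect_poly p)"
  unfolding rpoly_def
proof -
  assume a: "map_poly cnj p = p"
  show "map_poly cnj (reflect_poly p) = reflect_poly p"
  proof (rule poly_eq_nonzero)
    fix w :: complex assume w: "w \<noteq> 0"
    have "poly (map_poly cnj (reflect_poly p)) w = cnj (poly (reflect_poly p) (cnj w))" by simp
    also have "\<dots> = cnj (cnj w ^ degree p * poly p (inverse (cnj w)))"
      using w by (simp add: poly_reflect_poly_nz)
    also have "\<dots> = w ^ degree p * cnj (poly p (cnj (inverse w)))"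
      by (simp add: complex_cnj_power)
    also have "cnj (poly p (cnj (inverse w))) = poly (map_poly cnj p) (inverse w)" by simp
    also have "\<dots> = poly p (inverse w)" using a by simp
    finally show "poly (map_poly cnj (reflect_poly p)) w = poly (reflect_poly p) w"
      using w by (simp add: poly_reflect_poly_nz)
  qed
qed

lemma rpoly_real: "rpoly p \<Longrightarrow> poly p (complex_of_real x) = complex_of_real (Re (poly p (complex_of_real x)))"
proof -
  assume "rpoly p"
  then have "cnj (poly p (complex_of_real x)) = poly p (complex_of_real x)"
    unfolding rpoly_def by (metis poly_cnj complex_cnj_complex_of_real)
  then show ?thesis by (metis Reals_cnj_iff of_real_Re)
qed

lemma rpoly_cnj_real: "rpoly p \<Longrightarrow> cnj (poly p (complex_of_real x)) = poly p (complex_of_real x)"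
  unfolding rpoly_def by (metis poly_cnj complex_cnj_complex_of_real)


lemma final_algebra:
  fixes x g g1 g2 a a1 b b1 :: real
  assumes e1: "(1 - x*x) * g = a*a - b*b"
    and e2: "- x * g + (1 - x*x) * g1 = a1 * a - b1 * b"
    and e3: "- g - x * g1 - x * g1 + (1 - x*x) * g2 = a1 * a1 - b1 * b1"
    and gpos: "g > 0" and D: "1 - x*x \<noteq> 0" and anz: "a \<noteq> 0"
  shows "1 / pi * sqrt (g * g2 - g1\<^sup>2) / g =
         1 / pi * sqrt (1 - (((1 - x\<^sup>2) * ((b1 * a - b * a1) / (a * a))) / (1 - (b / a)\<^sup>2))\<^sup>2) / \<bar>1 - x\<^sup>2\<bar>"
proof -
  define D where "D = 1 - x*x"
  define T where "T = a * b1 - a1 * b"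
  have key: "D^2 * (g * g2 - g1^2) = g^2 - T^2"
    using e1 e2 e3 unfolding D_def T_def by algebra
  have h: "((1 - x\<^sup>2) * ((b1 * a - b * a1) / (a * a))) / (1 - (b / a)\<^sup>2) = T / g"
  proof -
    have "1 - (b / a)\<^sup>2 = (a*a - b*b) / (a*a)" using anz by (simp add: field_simps power2_eq_square)
    also have "\<dots> = D * g / (a * a)" using e1 D_def by simp
    finally have "1 - (b / a)\<^sup>2 = D * g / (a * a)" .
    moreover have "1 - x\<^sup>2 = D" by (simp add: D_def power2_eq_square)
    ultimately have "((1 - x\<^sup>2) * ((b1 * a - b * a1) / (a * a))) / (1 - (b / a)\<^sup>2)
       = (D * ((b1 * a - b * a1) / (a * a))) / (D * g / (a * a))" by simp
    also have "\<dots> = (b1 * a - b * a1) / g" using anz D gpos unfolding D_def by (simp add: field_simps)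
    finally show ?thesis by (simp add: T_def algebra_simps)
  qed
  have "g * g2 - g1^2 = (g / D)^2 * (1 - (T / g)^2)"
    using key D gpos unfolding D_def[symmetric] by (simp add: field_simps power2_eq_square) algebra
  then have "sqrt (g * g2 - g1^2) = \<bar>g / D\<bar> * sqrt (1 - (T/g)^2)"
    by (simp add: real_sqrt_mult)
  also have "\<bar>g / D\<bar> = g / \<bar>D\<bar>" using gpos by simp
  finally have "sqrt (g * g2 - g1^2) / g = sqrt (1 - (T/g)^2) / \<bar>D\<bar>" using gpos by simp
  then have "1 / pi * (sqrt (g * g2 - g1^2) / g) = 1 / pi * (sqrt (1 - (T/g)^2) / \<bar>D\<bar>)" by simp
  then show ?thesis unfolding h D_def by (simp add: power2_eq_square)
qed


theorem theorem1p1: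
  fixes M :: "complex measure" and \<phi> :: "nat \<Rightarrow> complex poly" and n :: nat and x :: real
  assumes prob: "prob_space M"
    and borel: "sets M = sets borel"
    and circle: "emeasure M (sphere 0 1) = 1"
    and symm: "\<And>A. A \<in> sets borel \<Longrightarrow> emeasure M (cnj ` A) = emeasure M A"
    and inf_supp: "infinite (msupport M)"
    and deg: "\<And>i. degree (\<phi> i) = i"
    and lead: "\<And>i. Im (lead_coeff (\<phi> i)) = 0 \<and> Re (lead_coeff (\<phi> i)) > 0"
    and orth: "\<And>i j. integral\<^sup>L M (\<lambda>z. poly (\<phi> i) z * cnj (poly (\<phi> j) z))
                       = (if i = j then 1 else 0)"
    and n: "n \<ge> 1"
    and x: "x \<noteq> 1" "x \<noteq> -1"
    and nopole: "poly (phistar (\<phi> n)) (complex_of_real x) \<noteq> 0"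
  shows "rho10 \<phi> n x = 1 / pi * sqrt (1 - (hn \<phi> n x)\<^sup>2) / \<bar>1 - x\<^sup>2\<bar>"
proof -
  interpret opuc M \<phi>
    by (rule opuc.intro[OF prob borel circle symm deg lead orth])
  define z where "z = complex_of_real x"
  have rp: "rpoly (\<phi> i)" for i using real_coeffs by (simp add: rpoly_def)
  have rpd: "rpoly (pderiv (\<phi> i))" for i using rp by (rule rpoly_pderiv)
  have rps: "rpoly (reflect_poly (\<phi> n))" using rp by (rule rpoly_reflect)
  have rpsd: "rpoly (pderiv (reflect_poly (\<phi> n)))" using rps by (rule rpoly_pderiv)
  define re where "re p = Re (poly p z)" for p
  have R: "poly p z = complex_of_real (re p)" if "rpoly p" for p
    using rpoly_real[OF that, of x] by (simp add: re_def z_def)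
  have C: "cnj (poly p z) = poly p z" if "rpoly p" for p
    using rpoly_cnj_real[OF that, of x] by (simp add: z_def)
  define g where "g = (\<Sum>i<n. re (\<phi> i) * re (\<phi> i))"
  define g1 where "g1 = (\<Sum>i<n. re (pderiv (\<phi> i)) * re (\<phi> i))"
  define g2 where "g2 = (\<Sum>i<n. re (pderiv (\<phi> i)) * re (pderiv (\<phi> i)))"
  define a where "a = re (reflect_poly (\<phi> n))"
  define a1 where "a1 = re (pderiv (reflect_poly (\<phi> n)))"
  define b where "b = re (\<phi> n)"
  define b1 where "b1 = re (pderiv (\<phi> n))"
  have Gg: "G n z z = complex_of_real g" unfolding G_def g_def
    by (simp add: R[OF rp])
  have Gg1: "G10 n z z = complex_of_real g1" unfolding G10_def g1_def
    by (simp add: R[OF rp] R[OF rpd])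
  have Gg2: "G11 n z z = complex_of_real g2" unfolding G11_def g2_def
    by (simp add: R[OF rpd])
  have K: "Kn \<phi> n z z = G n z z" unfolding Kn_def G_def by (simp add: C[OF rp])
  have K1: "Kn10 \<phi> n z z = G10 n z z" unfolding Kn10_def G10_def by (simp add: C[OF rp])
  have K2: "Kn11 \<phi> n z z = G11 n z z" unfolding Kn11_def G11_def by (simp add: C[OF rpd])
  have e1: "(1 - x*x) * g = a*a - b*b"
  proof -
    have "complex_of_real ((1 - x*x) * g) = complex_of_real (a*a - b*b)"
    proof -
      have "(1 - z*z) * complex_of_real g = complex_of_real a * complex_of_real a - complex_of_real b * complex_of_real b"
        using CD[of z z n] by (simp only: Gg a_def b_def R[OF rp] R[OF rps])
      then show ?thesis by (simp add: z_def)
    qed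
    then show ?thesis by (simp only: of_real_eq_iff)
  qed
  have e2: "- x * g + (1 - x*x) * g1 = a1 * a - b1 * b"
  proof -
    have "complex_of_real (- x * g + (1 - x*x) * g1) = complex_of_real (a1 * a - b1 * b)"
    proof -
      have "- z * complex_of_real g + (1 - z*z) * complex_of_real g1 = complex_of_real a1 * complex_of_real a - complex_of_real b1 * complex_of_real b"
        using D1[of z n z] by (simp only: Gg Gg1 a_def b_def a1_def b1_def R[OF rp] R[OF rps] R[OF rpd] R[OF rpsd])
      then show ?thesis by (simp add: z_def)
    qed
    then show ?thesis by (simp only: of_real_eq_iff)
  qed
  have e3: "- g - x * g1 - x * g1 + (1 - x*x) * g2 = a1 * a1 - b1 * b1"
  proof -
    have "complex_of_real (- g - x * g1 - x * g1 + (1 - x*x) * g2) = complex_of_real (a1 * a1 - b1 * b1)"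
    proof -
      have "- complex_of_real g - z * complex_of_real g1 - z * complex_of_real g1 + (1 - z*z) * complex_of_real g2 = complex_of_real a1 * complex_of_real a1 - complex_of_real b1 * complex_of_real b1"
        using D2[of n z z] by (simp only: Gg Gg1 Gg2 a1_def b1_def R[OF rpd] R[OF rpsd])
      then show ?thesis by (simp add: z_def)
    qed
    then show ?thesis by (simp only: of_real_eq_iff)
  qed
  have gpos: "g > 0"
  proof -
    have "re (\<phi> 0) * re (\<phi> 0) \<le> g" unfolding g_def
      using n by (intro member_le_sum) auto
    moreover have "re (\<phi> 0) \<noteq> 0"
    proof -
      obtain k where k: "\<phi> 0 = [:k:]" using deg[of 0] by (metis degree0_coeffs)
      have "k \<noteq> 0" using lead_nz[of 0] k by simp
      then have "poly (\<phi> 0) z \<noteq> 0" using k by simp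
      then show ?thesis using R[OF rp, of 0] by auto
    qed
    ultimately show ?thesis by (smt (verit) not_real_square_gt_zero)
  qed
  have D: "1 - x*x \<noteq> 0"
  proof
    assume "1 - x*x = 0"
    then have "(x - 1) * (x + 1) = 0" by (simp add: algebra_simps)
    then show False using x by auto
  qed
  have anz: "a \<noteq> 0" using nopole R[OF rps] unfolding a_def phistar_def z_def by auto
  have rho: "rho10 \<phi> n x = 1 / pi * sqrt (g * g2 - g1\<^sup>2) / g"
  proof -
    have "Kn \<phi> n z z * Kn11 \<phi> n z z - (Kn10 \<phi> n z z)\<^sup>2 = complex_of_real (g * g2 - g1\<^sup>2)"
      unfolding K K1 K2 Gg Gg1 Gg2 by simp
    then show ?thesis unfolding rho10_def Let_def z_def[symmetric] K Gg by simp
  qed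
  have db: "(bn \<phi> n has_field_derivative (b1 * a - b * a1) / (a * a)) (at z)"
  proof -
    have "((\<lambda>w. poly (\<phi> n) w / poly (reflect_poly (\<phi> n)) w) has_field_derivative
       (poly (pderiv (\<phi> n)) z * poly (reflect_poly (\<phi> n)) z - poly (\<phi> n) z * poly (pderiv (reflect_poly (\<phi> n))) z)
       / (poly (reflect_poly (\<phi> n)) z * poly (reflect_poly (\<phi> n)) z)) (at z)"
      using nopole unfolding phistar_def z_def by (intro DERIV_divide poly_DERIV) auto
    moreover have "bn \<phi> n = (\<lambda>w. poly (\<phi> n) w / poly (reflect_poly (\<phi> n)) w)"
      by (simp add: bn_def phistar_def fun_eq_iff)
    ultimately show ?thesis
      by (simp add: a_def b_def a1_def b1_def R[OF rp] R[OF rps] R[OF rpd] R[OF rpsd])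
  qed
  have hval: "hn \<phi> n x = ((1 - x\<^sup>2) * ((b1 * a - b * a1) / (a * a))) / (1 - (b / a)\<^sup>2)"
  proof -
    have bz: "bn \<phi> n z = complex_of_real (b / a)"
      by (simp add: bn_def phistar_def a_def b_def R[OF rp] R[OF rps])
    have "(1 - z\<^sup>2) * deriv (bn \<phi> n) z / (1 - (bn \<phi> n z)\<^sup>2) =
      complex_of_real (((1 - x\<^sup>2) * ((b1 * a - b * a1) / (a * a))) / (1 - (b / a)\<^sup>2))"
      unfolding DERIV_imp_deriv[OF db] bz by (simp add: z_def)
    then show ?thesis unfolding hn_def Let_def z_def[symmetric] by simp
  qed
  show ?thesis unfolding rho hval by (rule final_algebra[OF e1 e2 e3 gpos D anz])
qed

end
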